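(* Let $\mathcal{X}$ be a discrete set and let $\mathcal{A}$ be an $(\varepsilon,\delta)$-differentially private randomized algorithm that, given a dataset $S\in\mathcal{X}^n$, outputs a function from $\mathcal{X}$ to $[0,1]$. Let $\mathcal{P}$ be any distribution over $\mathcal{X}$, let $\mathbf{S}$ be distributed according to $\mathcal{P}^n$, and let $\boldsymbol{\phi}=\mathcal{A}(\mathbf{S})$. Then for any $\beta>0$, $\tau>0$ and $n\ge 48\ln(4/\beta)/\tau^2$, if $\varepsilon\le\tau/4$ and $\delta=\exp(-4\ln(8/\beta)/\tau)$, then $$\Pr\left[\,\left|\mathcal{P}[\boldsymbol{\phi}]-\mathcal{E}_{\mathbf{S}}[\boldsymbol{\phi}]\right|>\tau\,\right]\le\beta,$$ where the probability is over the randomness of $\mathcal{A}$ and of $\mathbf{S}$.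
   Context: For a function $\psi:\mathcal{X}\to[0,1]$, $\mathcal{P}[\psi]=\mathbb{E}_{x\sim\mathcal{P}}[\psi(x)]$, and for a dataset $S=(x_1,\dots,x_n)$, $\mathcal{E}_S[\psi]=\frac1n\sum_{i=1}^n\psi(x_i)$. Two datasets in $\mathcal{X}^n$ are adjacent if they differ in a single element. A randomized algorithm $\mathcal{A}$ with domain $\mathcal{X}^n$ is $(\varepsilon,\delta)$-differentially private if for every set $\mathcal{S}$ of outputs and every pair of adjacent datasets $x,y$, $\Pr[\mathcal{A}(x)\in\mathcal{S}]\le e^{\varepsilon}\Pr[\mathcal{A}(y)\in\mathcal{S}]+\delta$ (probability over the coins of $\mathcal{A}$). *)

theory Defs
  imports "HOL-Probability.Probability"
begin

definition output_space :: "('a \<Rightarrow> real) measure" where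
  "output_space = PiM UNIV (\<lambda>_. restrict_space borel {0..1::real})"

definition pop_mean :: "'a pmf \<Rightarrow> ('a \<Rightarrow> real) \<Rightarrow> real" where
  "pop_mean P \<psi> = measure_pmf.expectation P \<psi>"

definition emp_mean :: "'a list \<Rightarrow> ('a \<Rightarrow> real) \<Rightarrow> real" where
  "emp_mean S \<psi> = (\<Sum>x\<leftarrow>S. \<psi> x) / real (length S)"

definition adjacent :: "nat \<Rightarrow> 'a list \<Rightarrow> 'a list \<Rightarrow> bool" where
  "adjacent n x y \<longleftrightarrow> length x = n \<and> length y = n \<and> card {i. i < n \<and> x ! i \<noteq> y ! i} = 1"

definition rand_alg :: "nat \<Rightarrow> ('a list \<Rightarrow> ('a \<Rightarrow> real) measure) \<Rightarrow> bool" where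
  "rand_alg n A \<longleftrightarrow> (\<forall>S. length S = n \<longrightarrow> prob_space (A S) \<and> sets (A S) = sets output_space)"

definition diff_private :: "nat \<Rightarrow> real \<Rightarrow> real \<Rightarrow> ('a list \<Rightarrow> ('a \<Rightarrow> real) measure) \<Rightarrow> bool" where
  "diff_private n \<epsilon> \<delta> A \<longleftrightarrow>
     (\<forall>x y T. adjacent n x y \<longrightarrow> T \<in> sets output_space \<longrightarrow>
        measure (A x) T \<le> exp \<epsilon> * measure (A y) T + \<delta>)"

end

theory Submission
  imports Defs "HOL-Analysis.Harmonic_Numbers"
begin


lemma space_out: "space output_space = {f. \<forall>x. f x \<in> {0..1::real}}"
  unfolding output_space_def by (auto simp: space_PiM PiE_def extensional_def space_restrict_space)

lemma meas_app[measurable]: "(\<lambda>\<phi>. \<phi> x) \<in> borel_measurable output_space"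
proof -
  have "(\<lambda>\<phi>. \<phi> x) \<in> measurable output_space (restrict_space borel {0..1::real})"
    unfolding output_space_def by (rule measurable_component_singleton) simp
  moreover have "(\<lambda>y::real. y) \<in> borel_measurable (restrict_space borel {0..1::real})"
    by (rule measurable_restrict_space1) simp
  ultimately show ?thesis by (rule measurable_compose)
qed

lemma meas_pair: "(\<lambda>(\<phi>::'a::countable \<Rightarrow> real, x). \<phi> x) \<in> borel_measurable (output_space \<Otimes>\<^sub>M count_space UNIV)"
proof -
  have "(\<lambda>(x, \<phi>::'a::countable \<Rightarrow> real). \<phi> x) \<in> borel_measurable (count_space UNIV \<Otimes>\<^sub>M output_space)"
    by (rule measurable_pair_measure_countable1) (auto intro: meas_app)
  then show ?thesis by (subst measurable_pair_swap_iff) simp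
qed

lemma meas_pop[measurable]: "(\<lambda>\<phi>. pop_mean (P::'a::countable pmf) \<phi>) \<in> borel_measurable output_space"
proof -
  have "(\<lambda>(\<phi>::'a \<Rightarrow> real, x). \<phi> x) \<in> borel_measurable (output_space \<Otimes>\<^sub>M measure_pmf P)"
    using meas_pair
    by (subst measurable_cong_sets[OF sets_pair_measure_cong[OF refl sets_measure_pmf_count_space] refl])
  then show ?thesis unfolding pop_mean_def
    by (rule measure_pmf.borel_measurable_lebesgue_integral)
qed

lemma dp_fun:
  assumes M: "prob_space M" and N: "prob_space N"
    and sM: "sets M = sets output_space" and sN: "sets N = sets output_space"
    and dpT: "\<And>T. T \<in> sets output_space \<Longrightarrow> measure M T \<le> exp e * measure N T + d"
    and hm: "h \<in> borel_measurable output_space"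
    and hb: "\<And>\<phi>. \<phi> \<in> space output_space \<Longrightarrow> 0 \<le> h \<phi> \<and> h \<phi> \<le> B"
    and d: "d \<ge> 0"
  shows "(\<integral>\<phi>. h \<phi> \<partial>M) \<le> exp e * (\<integral>\<phi>. h \<phi> \<partial>N) + d * B"
proof -
  have LC: "(\<integral>\<^sup>+\<phi>. ennreal (h \<phi>) \<partial>M') =
      (\<integral>\<^sup>+s. emeasure M' {\<phi>\<in>space M'. s < h \<phi>} * indicator {0..} s \<partial>lborel)"
    if P': "prob_space M'" and sM': "sets M' = sets output_space" for M'
  proof -
    interpret P': prob_space M' by fact
    interpret pair_sigma_finite M' lborel
      by (intro pair_sigma_finite.intro) (auto intro: P'.sigma_finite_measure_axioms
         lborel.sigma_finite_measure_axioms)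
    have sp: "space M' = space output_space" using sM' by (rule sets_eq_imp_space_eq)
    have hm': "h \<in> borel_measurable M'" using hm by (simp add: measurable_cong_sets[OF sM' refl])
    have "(\<integral>\<^sup>+\<phi>. ennreal (h \<phi>) \<partial>M') = (\<integral>\<^sup>+\<phi>. (\<integral>\<^sup>+s. indicator {\<phi>\<in>space M'. s < h \<phi>} \<phi> * indicator {0..} s \<partial>lborel) \<partial>M')"
    proof (rule nn_integral_cong)
      fix \<phi> assume "\<phi> \<in> space M'"
      then have h0: "0 \<le> h \<phi>" using hb sp by auto
      have "(\<integral>\<^sup>+s. indicator {\<phi>\<in>space M'. s < h \<phi>} \<phi> * indicator {0..} s \<partial>lborel)
          = (\<integral>\<^sup>+s. indicator {0..<h \<phi>} s \<partial>lborel)"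
        using \<open>\<phi> \<in> space M'\<close> by (intro nn_integral_cong) (auto simp: indicator_def)
      also have "\<dots> = ennreal (h \<phi>)" using h0 by simp
      finally show "ennreal (h \<phi>) = (\<integral>\<^sup>+s. indicator {\<phi>\<in>space M'. s < h \<phi>} \<phi> * indicator {0..} s \<partial>lborel)" by simp
    qed
    also have "\<dots> = (\<integral>\<^sup>+s. (\<integral>\<^sup>+\<phi>. indicator {\<phi>\<in>space M'. s < h \<phi>} \<phi> * indicator {0..} s \<partial>M') \<partial>lborel)"
      by (rule Fubini'[symmetric]) (use hm' in measurable)
    also have "\<dots> = (\<integral>\<^sup>+s. emeasure M' {\<phi>\<in>space M'. s < h \<phi>} * indicator {0..} s \<partial>lborel)"
    proof (rule nn_integral_cong)
      fix s :: real
      have "{\<phi>\<in>space M'. s < h \<phi>} \<in> sets M'" using hm' by measurable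
      then show "(\<integral>\<^sup>+\<phi>. indicator {\<phi>\<in>space M'. s < h \<phi>} \<phi> * indicator {0..} s \<partial>M') =
          emeasure M' {\<phi>\<in>space M'. s < h \<phi>} * indicator {0..} s"
        by (simp add: nn_integral_multc)
    qed
    finally show ?thesis .
  qed
  interpret MM: prob_space M by fact
  interpret NN: prob_space N by fact
  have spM: "space M = space output_space" using sM by (rule sets_eq_imp_space_eq)
  have spN: "space N = space output_space" using sN by (rule sets_eq_imp_space_eq)
  have hmM: "h \<in> borel_measurable M" using hm by (simp add: measurable_cong_sets[OF sM refl])
  have hmN: "h \<in> borel_measurable N" using hm by (simp add: measurable_cong_sets[OF sN refl])
  have B0: "0 \<le> B" using hb[of "\<lambda>_. 0"] by (auto simp: space_out)
  have pt: "emeasure M {\<phi>\<in>space M. s < h \<phi>} * indicator {0..} s \<le>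
      exp e * (emeasure N {\<phi>\<in>space N. s < h \<phi>} * indicator {0..} s) + ennreal d * indicator {0..<B} s" for s :: real
  proof (cases "0 \<le> s \<and> s < B")
    case True
    have setM: "{\<phi>\<in>space M. s < h \<phi>} = {\<phi>\<in>space output_space. s < h \<phi>}" using spM by simp
    have setN: "{\<phi>\<in>space N. s < h \<phi>} = {\<phi>\<in>space output_space. s < h \<phi>}" using spN by simp
    have Tm: "{\<phi>\<in>space output_space. s < h \<phi>} \<in> sets output_space" using hm by measurable
    have "emeasure M {\<phi>\<in>space M. s < h \<phi>} = ennreal (measure M {\<phi>\<in>space output_space. s < h \<phi>})"
      by (simp add: setM MM.emeasure_eq_measure)
    also have "\<dots> \<le> ennreal (exp e * measure N {\<phi>\<in>space output_space. s < h \<phi>} + d)"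
      using dpT[OF Tm] by (rule ennreal_leI)
    also have "\<dots> = exp e * emeasure N {\<phi>\<in>space N. s < h \<phi>} + d"
      using d by (simp add: setN NN.emeasure_eq_measure ennreal_plus ennreal_mult)
    finally show ?thesis using True by (simp add: indicator_def)
  next
    case False
    then consider "s < 0" | "B \<le> s" by linarith
    then show ?thesis
    proof cases
      case 1 then show ?thesis by (simp add: indicator_def)
    next
      case 2
      have e0: "{\<phi>\<in>space M. s < h \<phi>} = {}" using 2 hb spM by fastforce
      show ?thesis unfolding e0 by simp
    qed
  qed
  have mN: "(\<lambda>s. emeasure N {\<phi>\<in>space N. s < h \<phi>} * indicator {0..} s) \<in> borel_measurable lborel"
  proof -
    have "(\<lambda>s. \<integral>\<^sup>+\<phi>. indicator {\<phi>\<in>space N. s < h \<phi>} \<phi> * indicator {0..} s \<partial>N) \<in> borel_measurable lborel"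
      using hmN by measurable
    moreover have "(\<integral>\<^sup>+\<phi>. indicator {\<phi>\<in>space N. s < h \<phi>} \<phi> * indicator {0..} s \<partial>N) =
        emeasure N {\<phi>\<in>space N. s < h \<phi>} * indicator {0..} s" for s :: real
    proof -
      have "{\<phi>\<in>space N. s < h \<phi>} \<in> sets N" using hmN by measurable
      then show ?thesis by (simp add: nn_integral_multc)
    qed
    ultimately show ?thesis by simp
  qed
  have "ennreal (\<integral>\<phi>. h \<phi> \<partial>M) = (\<integral>\<^sup>+\<phi>. ennreal (h \<phi>) \<partial>M)"
    by (rule nn_integral_eq_integral[symmetric])
       (auto intro!: MM.integrable_const_bound[where B=B] hmM simp: spM hb)
  also have "\<dots> = (\<integral>\<^sup>+s. emeasure M {\<phi>\<in>space M. s < h \<phi>} * indicator {0..} s \<partial>lborel)"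
    by (rule LC) (fact+)
  also have "\<dots> \<le> (\<integral>\<^sup>+s. exp e * (emeasure N {\<phi>\<in>space N. s < h \<phi>} * indicator {0..} s) + ennreal d * indicator {0..<B} s \<partial>lborel)"
    by (rule nn_integral_mono) (rule pt)
  also have "\<dots> = (\<integral>\<^sup>+s. exp e * (emeasure N {\<phi>\<in>space N. s < h \<phi>} * indicator {0..} s) \<partial>lborel)
      + (\<integral>\<^sup>+s. ennreal d * indicator {0..<B} s \<partial>lborel)"
    by (rule nn_integral_add) (use mN in auto)
  also have "\<dots> = exp e * (\<integral>\<^sup>+s. emeasure N {\<phi>\<in>space N. s < h \<phi>} * indicator {0..} s \<partial>lborel) + d * B"
    using B0 mN d by (simp add: nn_integral_cmult nn_integral_cmult_indicator ennreal_mult)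
  also have "\<dots> = exp e * (\<integral>\<^sup>+\<phi>. ennreal (h \<phi>) \<partial>N) + d * B"
    by (subst LC[OF N sN]) rule
  also have "(\<integral>\<^sup>+\<phi>. ennreal (h \<phi>) \<partial>N) = ennreal (\<integral>\<phi>. h \<phi> \<partial>N)"
    by (rule nn_integral_eq_integral)
       (auto intro!: NN.integrable_const_bound[where B=B] hmN simp: spN hb)
  also have "exp e * ennreal (\<integral>\<phi>. h \<phi> \<partial>N) + ennreal (d * B) = ennreal (exp e * (\<integral>\<phi>. h \<phi> \<partial>N) + d * B)"
  proof -
    have I0: "0 \<le> (\<integral>\<phi>. h \<phi> \<partial>N)" by (rule Bochner_Integration.integral_nonneg) (simp add: spN hb)
    then show ?thesis using d B0 by (simp add: ennreal_plus ennreal_mult)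
  qed
  finally have "ennreal (\<integral>\<phi>. h \<phi> \<partial>M) \<le> ennreal (exp e * (\<integral>\<phi>. h \<phi> \<partial>N) + d * B)" .
  then show ?thesis
    using d B0 by (subst (asm) ennreal_le_iff) (auto intro!: add_nonneg_nonneg mult_nonneg_nonneg Bochner_Integration.integral_nonneg simp: spN hb)
qed



fun upd :: "'a list \<Rightarrow> nat list \<Rightarrow> 'a list \<Rightarrow> 'a list" where
  "upd S (i#js) (w#ws) = upd (S[i:=w]) js ws"
| "upd S _ _ = S"

lemma length_upd[simp]: "length (upd S js ws) = length S"
  by (induction S js ws rule: upd.induct) auto

lemma upd_nth_other: "j \<notin> set js \<Longrightarrow> upd S js ws ! j = S ! j"
  by (induction S js ws rule: upd.induct) auto

lemma upd_map_nth: "distinct js \<Longrightarrow> set js \<subseteq> {..<length S} \<Longrightarrow> length ws = length js \<Longrightarrow>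
    map (\<lambda>i. upd S js ws ! i) js = ws"
proof (induction S js ws rule: upd.induct)
  case (1 S i "js" w ws)
  then have "map (\<lambda>k. upd (S[i:=w]) js ws ! k) js = ws" by auto
  moreover have "upd (S[i:=w]) js ws ! i = w" using 1 by (simp add: upd_nth_other)
  ultimately show ?case by simp
qed auto

lemma integral_bind_pmf_bnd:
  fixes f :: "'b \<Rightarrow> real"
  assumes "\<And>y. \<bar>f y\<bar> \<le> B"
  shows "measure_pmf.expectation (bind_pmf p q) f = measure_pmf.expectation p (\<lambda>x. measure_pmf.expectation (q x) f)"
  unfolding measure_pmf_bind
  by (rule integral_bind[where K="count_space UNIV" and B=B and B'=1])
     (auto simp: assms measure_pmf.emeasure_space_1 intro!: measure_pmf.finite_measure
           measure_pmf_in_subprob_algebra)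

lemma integral_bind_pmf_supp:
  fixes f :: "'b \<Rightarrow> real"
  assumes "\<And>y. y \<in> set_pmf (bind_pmf p q) \<Longrightarrow> \<bar>f y\<bar> \<le> B"
  shows "measure_pmf.expectation (bind_pmf p q) f = measure_pmf.expectation p (\<lambda>x. measure_pmf.expectation (q x) f)"
proof -
  define f' where "f' = (\<lambda>y. max (-\<bar>B\<bar>) (min \<bar>B\<bar> (f y)))"
  have b: "\<bar>f' y\<bar> \<le> \<bar>B\<bar>" for y unfolding f'_def by auto
  have eq: "f' y = f y" if "y \<in> set_pmf (bind_pmf p q)" for y
    using assms[OF that] unfolding f'_def by auto
  have "measure_pmf.expectation (bind_pmf p q) f = measure_pmf.expectation (bind_pmf p q) f'"
    by (rule integral_cong_AE) (auto simp: AE_measure_pmf_iff eq)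
  also have "\<dots> = measure_pmf.expectation p (\<lambda>x. measure_pmf.expectation (q x) f')"
    by (rule integral_bind_pmf_bnd) (rule b)
  also have "\<dots> = measure_pmf.expectation p (\<lambda>x. measure_pmf.expectation (q x) f)"
  proof (rule integral_cong_AE)
    show "AE x in measure_pmf p. measure_pmf.expectation (q x) f' = measure_pmf.expectation (q x) f"
      unfolding AE_measure_pmf_iff
    proof
      fix x assume x: "x \<in> set_pmf p"
      show "measure_pmf.expectation (q x) f' = measure_pmf.expectation (q x) f"
        by (rule integral_cong_AE) (use x in \<open>auto simp: AE_measure_pmf_iff intro!: eq\<close>)
    qed
  qed simp_all
  finally show ?thesis .
qed

lemma integral_pair_pmf_supp:
  fixes f :: "'b \<times> 'c \<Rightarrow> real"
  assumes "\<And>y. y \<in> set_pmf (pair_pmf p q) \<Longrightarrow> \<bar>f y\<bar> \<le> B"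
  shows "measure_pmf.expectation (pair_pmf p q) f = measure_pmf.expectation p (\<lambda>x. measure_pmf.expectation q (\<lambda>y. f (x,y)))"
proof -
  have "measure_pmf.expectation (pair_pmf p q) f =
     measure_pmf.expectation p (\<lambda>x. measure_pmf.expectation (map_pmf (\<lambda>y. (x,y)) q) f)"
    unfolding pair_pmf_def
    by (subst integral_bind_pmf_supp[where B=B]) (use assms in \<open>auto simp: pair_pmf_def map_pmf_def\<close>)
  then show ?thesis by simp
qed

lemma rep_Suc_map: "replicate_pmf (Suc n) P = bind_pmf P (\<lambda>x. map_pmf (Cons x) (replicate_pmf n P))"
  by (simp add: map_pmf_def)

lemma update_dist:
  "i < n \<Longrightarrow> bind_pmf (replicate_pmf n P) (\<lambda>S. map_pmf (\<lambda>w. S[i:=w]) P) = replicate_pmf n P"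
proof (induction n arbitrary: i)
  case 0 then show ?case by simp
next
  case (Suc n)
  show ?case
  proof (cases i)
    case 0
    have "bind_pmf (replicate_pmf (Suc n) P) (\<lambda>S. map_pmf (\<lambda>w. S[i:=w]) P) =
      bind_pmf P (\<lambda>x. bind_pmf (replicate_pmf n P) (\<lambda>xs. map_pmf (\<lambda>w. w # xs) P))"
      by (simp add: 0 bind_assoc_pmf bind_return_pmf map_pmf_def)
    also have "\<dots> = bind_pmf (replicate_pmf n P) (\<lambda>xs. map_pmf (\<lambda>w. w # xs) P)"
      by (simp add: bind_pmf_const)
    also have "\<dots> = replicate_pmf (Suc n) P"
      by (simp add: map_pmf_def) (rule bind_commute_pmf)
    finally show ?thesis .
  next
    case (Suc j)
    with Suc.prems have j: "j < n" by simp
    have "bind_pmf (replicate_pmf (Suc n) P) (\<lambda>S. map_pmf (\<lambda>w. S[i:=w]) P) =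
      bind_pmf P (\<lambda>x. map_pmf (Cons x) (bind_pmf (replicate_pmf n P) (\<lambda>xs. map_pmf (\<lambda>w. xs[j:=w]) P)))"
      by (simp add: Suc bind_assoc_pmf bind_return_pmf map_pmf_def)
    also have "\<dots> = bind_pmf P (\<lambda>x. map_pmf (Cons x) (replicate_pmf n P))"
      by (simp only: Suc.IH[OF j])
    also have "\<dots> = replicate_pmf (Suc n) P"
      by (rule rep_Suc_map[symmetric])
    finally show ?thesis .
  qed
qed

lemma upd_dist:
  "set js \<subseteq> {..<n} \<Longrightarrow>
   bind_pmf (replicate_pmf n P) (\<lambda>S. map_pmf (\<lambda>W. upd S js W) (replicate_pmf (length js) P)) = replicate_pmf n P"
proof (induction "js")
  case Nil
  then show ?case by (simp add: map_pmf_def bind_return_pmf')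
next
  case (Cons i "js")
  have "bind_pmf (replicate_pmf n P) (\<lambda>S. map_pmf (\<lambda>W. upd S (i#js) W) (replicate_pmf (length (i#js)) P))
     = bind_pmf (bind_pmf (replicate_pmf n P) (\<lambda>S. map_pmf (\<lambda>w. S[i:=w]) P))
         (\<lambda>S'. map_pmf (\<lambda>W. upd S' js W) (replicate_pmf (length js) P))"
    by (simp add: bind_assoc_pmf bind_return_pmf map_pmf_def)
  also have "\<dots> = replicate_pmf n P"
    using Cons by (simp add: update_dist)
  finally show ?case .
qed

lemma exp_prod_rep:
  fixes g :: "'a \<Rightarrow> real"
  assumes "\<And>x. \<bar>g x\<bar> \<le> B"
  shows "measure_pmf.expectation (replicate_pmf k P) (\<lambda>W. prod_list (map g W)) = (measure_pmf.expectation P g) ^ k"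
proof (induction k)
  case 0 then show ?case by simp
next
  case (Suc k)
  have B0: "0 \<le> B" using assms[of undefined] by linarith
  have bnd: "\<bar>prod_list (map g W)\<bar> \<le> B ^ length W" for W
    by (induction W) (auto simp: abs_mult intro!: mult_mono assms B0)
  have "measure_pmf.expectation (replicate_pmf (Suc k) P) (\<lambda>W. prod_list (map g W)) =
     measure_pmf.expectation P (\<lambda>x. measure_pmf.expectation (map_pmf (Cons x) (replicate_pmf k P)) (\<lambda>W. prod_list (map g W)))"
    unfolding rep_Suc_map
    by (rule integral_bind_pmf_supp[where B="B ^ Suc k"])
       (use bnd B0 assms in \<open>auto simp: set_replicate_pmf abs_mult intro!: mult_mono\<close>)
  also have "\<dots> = measure_pmf.expectation P (\<lambda>x. g x * (measure_pmf.expectation P g) ^ k)"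
    by (simp add: Suc.IH)
  also have "\<dots> = (measure_pmf.expectation P g) ^ Suc k"
    by simp
  finally show ?case .
qed



lemma pmf_integrable_supp:
  fixes f :: "'b \<Rightarrow> real"
  assumes "\<And>x. x \<in> set_pmf p \<Longrightarrow> \<bar>f x\<bar> \<le> B"
  shows "integrable (measure_pmf p) f"
  by (rule measure_pmf.integrable_const_bound[where B=B]) (auto simp: AE_measure_pmf_iff assms)

lemma pmf_integral_mono_supp:
  fixes f g :: "'b \<Rightarrow> real"
  assumes "\<And>x. x \<in> set_pmf p \<Longrightarrow> f x \<le> g x"
    and "\<And>x. x \<in> set_pmf p \<Longrightarrow> \<bar>f x\<bar> \<le> B" and "\<And>x. x \<in> set_pmf p \<Longrightarrow> \<bar>g x\<bar> \<le> B'"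
  shows "measure_pmf.expectation p f \<le> measure_pmf.expectation p g"
  by (rule integral_mono_AE) (auto intro: pmf_integrable_supp assms simp: AE_measure_pmf_iff)

lemma fubini_pmf:
  fixes g :: "'c \<Rightarrow> 'b::countable \<Rightarrow> real"
  assumes M: "prob_space M"
    and gm: "\<And>W. (\<lambda>\<phi>. g \<phi> W) \<in> borel_measurable M"
    and gb: "\<And>W \<phi>. W \<in> set_pmf p \<Longrightarrow> \<phi> \<in> space M \<Longrightarrow> \<bar>g \<phi> W\<bar> \<le> B"
  shows "measure_pmf.expectation p (\<lambda>W. \<integral>\<phi>. g \<phi> W \<partial>M) = (\<integral>\<phi>. measure_pmf.expectation p (g \<phi>) \<partial>M)"
proof -
  interpret M: prob_space M by fact
  interpret PM: pair_sigma_finite "measure_pmf p" M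
    by (intro pair_sigma_finite.intro) (auto intro: M.sigma_finite_measure_axioms
       measure_pmf.sigma_finite_measure_axioms)
  define g' where "g' = (\<lambda>\<phi> W. if W \<in> set_pmf p then g \<phi> W else 0)"
  have g'm: "(\<lambda>(W, \<phi>). g' \<phi> W) \<in> borel_measurable (measure_pmf p \<Otimes>\<^sub>M M)"
  proof -
    have "(\<lambda>(W, \<phi>). g' \<phi> W) \<in> borel_measurable (count_space UNIV \<Otimes>\<^sub>M M)"
    proof (rule measurable_pair_measure_countable1)
      fix W :: 'b
      show "(\<lambda>\<phi>. case (W, \<phi>) of (W, \<phi>) \<Rightarrow> g' \<phi> W) \<in> borel_measurable M"
        by (cases "W \<in> set_pmf p") (auto simp: g'_def gm)
    qed simp
    then show ?thesis
      by (subst measurable_cong_sets[OF sets_pair_measure_cong[OF sets_measure_pmf_count_space refl] refl])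
  qed
  have B0: "0 \<le> B \<or> (\<forall>W\<in>set_pmf p. \<forall>\<phi>\<in>space M. False)"
    using gb by (meson abs_ge_zero order_trans)
  have int: "integrable (measure_pmf p \<Otimes>\<^sub>M M) (\<lambda>(W, \<phi>). g' \<phi> W)"
  proof (rule finite_measure.integrable_const_bound[where B="\<bar>B\<bar>"])
    show "finite_measure (measure_pmf p \<Otimes>\<^sub>M M)"
      using prob_space_pair[OF measure_pmf.prob_space_axioms M] unfolding prob_space_def by blast
    show "AE x in measure_pmf p \<Otimes>\<^sub>M M. norm (case x of (W, \<phi>) \<Rightarrow> g' \<phi> W) \<le> \<bar>B\<bar>"
      by (rule AE_I2) (auto simp: g'_def space_pair_measure dest!: gb)
  qed (rule g'm)
  have "measure_pmf.expectation p (\<lambda>W. \<integral>\<phi>. g \<phi> W \<partial>M) = measure_pmf.expectation p (\<lambda>W. \<integral>\<phi>. g' \<phi> W \<partial>M)"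
    by (rule integral_cong_AE) (auto simp: AE_measure_pmf_iff g'_def)
  also have "\<dots> = (\<integral>\<phi>. measure_pmf.expectation p (\<lambda>W. g' \<phi> W) \<partial>M)"
    using PM.Fubini_integral[OF int] by simp
  also have "\<dots> = (\<integral>\<phi>. measure_pmf.expectation p (g \<phi>) \<partial>M)"
    by (rule Bochner_Integration.integral_cong[OF refl], rule integral_cong_AE)
       (auto simp: AE_measure_pmf_iff g'_def)
  finally show ?thesis .
qed

definition fv :: "real \<Rightarrow> 'a pmf \<Rightarrow> ('a \<Rightarrow> real) \<Rightarrow> 'a \<Rightarrow> real" where
  "fv \<sigma> P \<phi> x = 1 + \<sigma> * (\<phi> x - pop_mean P \<phi>)"

lemma pop_mean_bounds:
  assumes "\<phi> \<in> space output_space"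
  shows "0 \<le> pop_mean P \<phi> \<and> pop_mean P \<phi> \<le> 1"
proof -
  have b: "0 \<le> \<phi> x \<and> \<phi> x \<le> 1" for x using assms by (auto simp: space_out)
  have i: "integrable (measure_pmf P) \<phi>"
    by (rule pmf_integrable_supp[where B=1]) (use b in auto)
  have "0 \<le> pop_mean P \<phi>" unfolding pop_mean_def by (rule Bochner_Integration.integral_nonneg) (use b in auto)
  moreover have "pop_mean P \<phi> \<le> measure_pmf.expectation P (\<lambda>_. 1)"
    unfolding pop_mean_def by (rule integral_mono[OF i]) (use b in auto)
  ultimately show ?thesis by simp
qed

lemma fv_bounds:
  assumes "\<sigma> \<in> {-1,1}" "\<phi> \<in> space output_space"
  shows "0 \<le> fv \<sigma> P \<phi> x \<and> fv \<sigma> P \<phi> x \<le> 2"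
proof -
  have "0 \<le> \<phi> x" "\<phi> x \<le> 1" using assms(2) by (auto simp: space_out)
  then show ?thesis using pop_mean_bounds[OF assms(2), of P] assms(1) by (auto simp: fv_def)
qed

lemma fv_mean:
  assumes "\<phi> \<in> space output_space"
  shows "measure_pmf.expectation P (fv \<sigma> P \<phi>) = 1"
proof -
  have b: "0 \<le> \<phi> x \<and> \<phi> x \<le> 1" for x using assms by (auto simp: space_out)
  have i: "integrable (measure_pmf P) \<phi>"
    by (rule pmf_integrable_supp[where B=1]) (use b in auto)
  show ?thesis unfolding fv_def using i by (simp add: pop_mean_def)
qed

lemma meas_fvprod[measurable]:
  fixes P :: "'a::countable pmf"
  shows "(\<lambda>\<phi>. prod_list (map (fv \<sigma> P \<phi>) W)) \<in> borel_measurable output_space"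
proof (induction W)
  case (Cons a W)
  have "(\<lambda>\<phi>. fv \<sigma> P \<phi> a) \<in> borel_measurable output_space" unfolding fv_def
    by (intro borel_measurable_add borel_measurable_times borel_measurable_diff borel_measurable_const meas_app meas_pop)
  with Cons show ?case by simp
qed simp

lemma fvprod_bounds:
  assumes "\<sigma> \<in> {-1,1}" "\<phi> \<in> space output_space"
  shows "0 \<le> prod_list (map (fv \<sigma> P \<phi>) W) \<and> prod_list (map (fv \<sigma> P \<phi>) W) \<le> 2 ^ length W"
  using fv_bounds[OF assms, of P]
  by (induction W) (auto intro!: mult_mono)

lemma one_step:
  assumes alg: "rand_alg n A" and dp: "diff_private n e d A" and e0: "0 \<le> e" and d0: "0 \<le> d"
    and hm: "h \<in> borel_measurable output_space"
    and hb: "\<And>\<phi>. \<phi> \<in> space output_space \<Longrightarrow> 0 \<le> h \<phi> \<and> h \<phi> \<le> B"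
    and S: "length S = n" and i: "i < n"
  shows "(\<integral>\<phi>. h \<phi> \<partial>A (S[i:=w])) \<le> exp e * (\<integral>\<phi>. h \<phi> \<partial>A S) + d * B"
proof -
  have B0: "0 \<le> B" using hb[of "\<lambda>_. 0"] by (auto simp: space_out)
  have AS: "prob_space (A S)" "sets (A S) = sets output_space" using alg S by (auto simp: rand_alg_def)
  have AS': "prob_space (A (S[i:=w]))" "sets (A (S[i:=w])) = sets output_space" using alg S by (auto simp: rand_alg_def)
  have I0: "0 \<le> (\<integral>\<phi>. h \<phi> \<partial>A S)"
    by (rule Bochner_Integration.integral_nonneg) (use hb sets_eq_imp_space_eq[OF AS(2)] in auto)
  show ?thesis
  proof (cases "w = S ! i")
    case True
    then have "S[i:=w] = S" by simp
    moreover have "(\<integral>\<phi>. h \<phi> \<partial>A S) \<le> exp e * (\<integral>\<phi>. h \<phi> \<partial>A S)"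
      using I0 e0 by (simp add: mult_le_cancel_right1 one_le_exp_iff)
    ultimately show ?thesis using d0 B0 by (smt (verit) mult_nonneg_nonneg)
  next
    case False
    have "{j. j < n \<and> S[i:=w] ! j \<noteq> S ! j} = {i}" using False i S by (auto simp: nth_list_update)
    then have adj: "adjacent n (S[i:=w]) S" using S by (simp add: adjacent_def)
    show ?thesis
      by (rule dp_fun[OF AS'(1) AS(1) AS'(2) AS(2) _ hm hb d0])
         (use dp adj in \<open>auto simp: diff_private_def\<close>)
  qed
qed

lemma group_dp:
  assumes alg: "rand_alg n A" and dp: "diff_private n e d A" and e0: "0 \<le> e" and d0: "0 \<le> d"
    and hm: "h \<in> borel_measurable output_space"
    and hb: "\<And>\<phi>. \<phi> \<in> space output_space \<Longrightarrow> 0 \<le> h \<phi> \<and> h \<phi> \<le> B"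
  shows "length S = n \<Longrightarrow> set js \<subseteq> {..<n} \<Longrightarrow> length ws = length js \<Longrightarrow>
    (\<integral>\<phi>. h \<phi> \<partial>A (upd S js ws)) \<le> exp (real (length js) * e) * (\<integral>\<phi>. h \<phi> \<partial>A S)
        + real (length js) * exp (real (length js) * e) * d * B"
proof (induction S js ws rule: upd.induct)
  case (1 S i js w ws)
  define k where "k = real (length js)"
  have B0: "0 \<le> B" using hb[of "\<lambda>_. 0"] by (auto simp: space_out)
  have IH: "(\<integral>\<phi>. h \<phi> \<partial>A (upd (S[i:=w]) js ws)) \<le> exp (k * e) * (\<integral>\<phi>. h \<phi> \<partial>A (S[i:=w]))
        + k * exp (k * e) * d * B" using 1 by (auto simp: k_def)
  have st: "(\<integral>\<phi>. h \<phi> \<partial>A (S[i:=w])) \<le> exp e * (\<integral>\<phi>. h \<phi> \<partial>A S) + d * B"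
    by (rule one_step[OF alg dp e0 d0 hm hb]) (use 1 in auto)
  have k0: "0 \<le> k" by (simp add: k_def)
  have "exp (k * e) * (\<integral>\<phi>. h \<phi> \<partial>A (S[i:=w])) \<le> exp (k * e) * (exp e * (\<integral>\<phi>. h \<phi> \<partial>A S) + d * B)"
    using st by (simp add: mult_left_mono)
  moreover have "exp (k * e) * (exp e * (\<integral>\<phi>. h \<phi> \<partial>A S)) = exp ((k+1) * e) * (\<integral>\<phi>. h \<phi> \<partial>A S)"
    by (simp add: algebra_simps exp_add)
  moreover have "exp (k * e) * (d * B) + k * exp (k * e) * d * B \<le> (k + 1) * exp ((k+1) * e) * d * B"
  proof -
    have "exp (k * e) \<le> exp ((k+1) * e)" using e0 by (simp add: algebra_simps)
    then have "(k + 1) * exp (k * e) * (d * B) \<le> (k + 1) * exp ((k+1) * e) * (d * B)"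
      using k0 d0 B0 by (intro mult_left_mono mult_right_mono) auto
    then show ?thesis by (simp add: algebra_simps)
  qed
  moreover have "exp (k * e) * (exp e * (\<integral>\<phi>. h \<phi> \<partial>A S) + d * B) = exp (k * e) * (exp e * (\<integral>\<phi>. h \<phi> \<partial>A S)) + exp (k * e) * (d * B)"
    by (simp add: algebra_simps)
  ultimately have main: "(\<integral>\<phi>. h \<phi> \<partial>A (upd (S[i:=w]) js ws)) \<le> exp ((k+1) * e) * (\<integral>\<phi>. h \<phi> \<partial>A S) + (k + 1) * exp ((k+1) * e) * d * B"
    using IH by linarith
  have eqk: "real (length (i#js)) = k + 1" by (simp add: k_def)
  show ?case unfolding eqk upd.simps by (rule main)
qed simp_all



lemma int_bounds:
  fixes h :: "_ \<Rightarrow> real"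
  assumes M: "prob_space M" and sM: "sets M = sets output_space"
    and hm: "h \<in> borel_measurable output_space"
    and hb: "\<And>\<phi>. \<phi> \<in> space output_space \<Longrightarrow> a \<le> h \<phi> \<and> h \<phi> \<le> b"
  shows "a \<le> (\<integral>\<phi>. h \<phi> \<partial>M) \<and> (\<integral>\<phi>. h \<phi> \<partial>M) \<le> b"
proof -
  interpret M: prob_space M by fact
  have sp: "space M = space output_space" using sM by (rule sets_eq_imp_space_eq)
  have hmM: "h \<in> borel_measurable M" using hm by (simp add: measurable_cong_sets[OF sM refl])
  have int: "integrable M h"
    by (rule M.integrable_const_bound[where B="max \<bar>a\<bar> \<bar>b\<bar>"])
       (auto simp: sp hmM abs_le_iff intro!: AE_I2 dest!: hb)
  have "(\<integral>\<phi>. a \<partial>M) \<le> (\<integral>\<phi>. h \<phi> \<partial>M)"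
    by (rule integral_mono[OF _ int]) (auto simp: sp hb)
  moreover have "(\<integral>\<phi>. h \<phi> \<partial>M) \<le> (\<integral>\<phi>. b \<partial>M)"
    by (rule integral_mono[OF int]) (auto simp: sp hb)
  ultimately show ?thesis by (simp add: M.prob_space)
qed

lemma tuple_bound:
  fixes A :: "'a::countable list \<Rightarrow> ('a \<Rightarrow> real) measure" and P :: "'a pmf"
  assumes alg: "rand_alg n A" and dp: "diff_private n e d A" and e0: "0 \<le> e" and d0: "0 \<le> d"
    and \<sigma>: "\<sigma> \<in> {-1,1}" and js: "distinct js" "set js \<subseteq> {..<n}"
  shows "measure_pmf.expectation (replicate_pmf n P)
      (\<lambda>S. \<integral>\<phi>. prod_list (map (\<lambda>i. fv \<sigma> P \<phi> (S!i)) js) \<partial>A S)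
    \<le> exp (real (length js) * e) * (1 + real (length js) * d * 2 ^ length js)"
proof -
  define t where "t = length js"
  define F where "F = (\<lambda>S. \<integral>\<phi>. prod_list (map (\<lambda>i. fv \<sigma> P \<phi> (S!i)) js) \<partial>A S)"
  define G where "G = (\<lambda>S W. \<integral>\<phi>. prod_list (map (fv \<sigma> P \<phi>) W) \<partial>A S)"
  define C where "C = real t * exp (real t * e) * d * 2 ^ t"
  have AS: "prob_space (A S)" "sets (A S) = sets output_space" if "length S = n" for S
    using alg that by (auto simp: rand_alg_def)
  have Gb: "0 \<le> G S W \<and> G S W \<le> 2 ^ length W" if "length S = n" for S W
    unfolding G_def by (rule int_bounds[OF AS[OF that]]) (use fvprod_bounds[OF \<sigma>] in auto)
  have Fb: "0 \<le> F S \<and> F S \<le> 2 ^ t" if "length S = n" for S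
  proof -
    have "F S = G S (map (\<lambda>i. S!i) js)" unfolding F_def G_def by (simp add: o_def)
    then show ?thesis using Gb[OF that, of "map (\<lambda>i. S!i) js"] by (simp add: t_def)
  qed
  have C0: "0 \<le> C" unfolding C_def using d0 by simp
  have supn: "length S = n" if "S \<in> set_pmf (replicate_pmf n P)" for S
    using that by (simp add: set_replicate_pmf)
  have supt: "length W = t" if "W \<in> set_pmf (replicate_pmf t P)" for W
    using that by (simp add: set_replicate_pmf)
  have inner: "measure_pmf.expectation (replicate_pmf t P) (\<lambda>W. F (upd S js W)) \<le> exp (real t * e) + C"
    if S: "length S = n" for S
  proof -
    have "measure_pmf.expectation (replicate_pmf t P) (\<lambda>W. F (upd S js W))
        \<le> measure_pmf.expectation (replicate_pmf t P) (\<lambda>W. exp (real t * e) * G S W + C)"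
    proof (rule pmf_integral_mono_supp[where B="2^t" and B'="exp (real t * e) * 2^t + C"])
      fix W assume W: "W \<in> set_pmf (replicate_pmf t P)"
      have lW: "length W = length js" using supt[OF W] by (simp add: t_def)
      have mW: "map (\<lambda>i. upd S js W ! i) js = W" by (rule upd_map_nth[OF js(1) _ lW]) (use js(2) S in auto)
      have mW2: "map (\<lambda>i. fv \<sigma> P \<phi> (upd S js W ! i)) js = map (fv \<sigma> P \<phi>) W" for \<phi>
        by (subst mW[symmetric]) simp
      have "F (upd S js W) = G (upd S js W) W"
        unfolding F_def G_def mW2 ..
      also have "\<dots> \<le> exp (real t * e) * G S W + C"
      proof -
        have hbW: "\<And>\<phi>. \<phi> \<in> space output_space \<Longrightarrow> 0 \<le> prod_list (map (fv \<sigma> P \<phi>) W) \<and> prod_list (map (fv \<sigma> P \<phi>) W) \<le> 2 ^ length W"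
          using fvprod_bounds[OF \<sigma>] by blast
        show ?thesis using group_dp[OF alg dp e0 d0 meas_fvprod hbW S js(2) lW] lW by (simp add: G_def C_def t_def)
      qed
      finally show "F (upd S js W) \<le> exp (real t * e) * G S W + C" .
      show "\<bar>F (upd S js W)\<bar> \<le> 2 ^ t" using Fb[of "upd S js W"] S by simp
      show "\<bar>exp (real t * e) * G S W + C\<bar> \<le> exp (real t * e) * 2 ^ t + C"
        using Gb[OF S, of W] supt[OF W] C0 by (simp add: abs_mult)
    qed
    also have "\<dots> = exp (real t * e) * measure_pmf.expectation (replicate_pmf t P) (G S) + C"
    proof -
      have "integrable (measure_pmf (replicate_pmf t P)) (G S)"
        by (rule pmf_integrable_supp[where B="2^t"]) (use Gb[OF S] supt in auto)
      then show ?thesis by simp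
    qed
    also have "measure_pmf.expectation (replicate_pmf t P) (G S) = 1"
    proof -
      have "measure_pmf.expectation (replicate_pmf t P) (G S) =
          (\<integral>\<phi>. measure_pmf.expectation (replicate_pmf t P) (\<lambda>W. prod_list (map (fv \<sigma> P \<phi>) W)) \<partial>A S)"
        unfolding G_def
      proof (rule fubini_pmf[OF AS(1)[OF S], where B="2^t"])
        fix W
        show "(\<lambda>\<phi>. prod_list (map (fv \<sigma> P \<phi>) W)) \<in> borel_measurable (A S)"
          by (subst measurable_cong_sets[OF AS(2)[OF S] refl]) (rule meas_fvprod)
      next
        fix W \<phi> assume W: "W \<in> set_pmf (replicate_pmf t P)" and \<phi>: "\<phi> \<in> space (A S)"
        have "\<phi> \<in> space output_space" using \<phi> sets_eq_imp_space_eq[OF AS(2)[OF S]] by simp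
        then show "\<bar>prod_list (map (fv \<sigma> P \<phi>) W)\<bar> \<le> 2 ^ t"
          using fvprod_bounds[OF \<sigma>, of \<phi> P W] supt[OF W] by simp
      qed
      also have "\<dots> = (\<integral>\<phi>. 1 \<partial>A S)"
      proof (rule Bochner_Integration.integral_cong[OF refl])
        fix \<phi> assume "\<phi> \<in> space (A S)"
        then have \<phi>: "\<phi> \<in> space output_space" using sets_eq_imp_space_eq[OF AS(2)[OF S]] by simp
        have "measure_pmf.expectation (replicate_pmf t P) (\<lambda>W. prod_list (map (fv \<sigma> P \<phi>) W)) =
            (measure_pmf.expectation P (fv \<sigma> P \<phi>)) ^ t"
          by (rule exp_prod_rep[where B=2]) (use fv_bounds[OF \<sigma> \<phi>] in auto)
        then show "measure_pmf.expectation (replicate_pmf t P) (\<lambda>W. prod_list (map (fv \<sigma> P \<phi>) W)) = 1"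
          by (simp add: fv_mean[OF \<phi>])
      qed
      also have "\<dots> = 1" using prob_space.prob_space[OF AS(1)[OF S]] by simp
      finally show ?thesis .
    qed
    finally show ?thesis by simp
  qed
  have "measure_pmf.expectation (replicate_pmf n P) F =
      measure_pmf.expectation (bind_pmf (replicate_pmf n P) (\<lambda>S. map_pmf (\<lambda>W. upd S js W) (replicate_pmf t P))) F"
    using upd_dist[OF js(2), of P] by (simp add: t_def)
  also have "\<dots> = measure_pmf.expectation (replicate_pmf n P) (\<lambda>S. measure_pmf.expectation (map_pmf (\<lambda>W. upd S js W) (replicate_pmf t P)) F)"
    by (rule integral_bind_pmf_supp[where B="2^t"])
       (use upd_dist[OF js(2), of P] Fb supn in \<open>auto simp: t_def\<close>)
  also have "\<dots> = measure_pmf.expectation (replicate_pmf n P) (\<lambda>S. measure_pmf.expectation (replicate_pmf t P) (\<lambda>W. F (upd S js W)))"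
    by simp
  also have "\<dots> \<le> measure_pmf.expectation (replicate_pmf n P) (\<lambda>S. exp (real t * e) + C)"
  proof (rule pmf_integral_mono_supp[where B="2^t" and B'="exp (real t * e) + C"])
    fix S assume S: "S \<in> set_pmf (replicate_pmf n P)"
    show "measure_pmf.expectation (replicate_pmf t P) (\<lambda>W. F (upd S js W)) \<le> exp (real t * e) + C"
      by (rule inner[OF supn[OF S]])
    have "0 \<le> measure_pmf.expectation (replicate_pmf t P) (\<lambda>W. F (upd S js W))"
      by (rule integral_nonneg_AE) (use Fb supn[OF S] in \<open>auto simp: AE_measure_pmf_iff\<close>)
    moreover have "measure_pmf.expectation (replicate_pmf t P) (\<lambda>W. F (upd S js W)) \<le> measure_pmf.expectation (replicate_pmf t P) (\<lambda>W. 2^t)"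
      by (rule pmf_integral_mono_supp[where B="2^t" and B'="2^t"]) (use Fb supn[OF S] in auto)
    ultimately show "\<bar>measure_pmf.expectation (replicate_pmf t P) (\<lambda>W. F (upd S js W))\<bar> \<le> 2^t" by simp
    show "\<bar>exp (real t * e) + C\<bar> \<le> exp (real t * e) + C" using C0 by simp
  qed
  also have "\<dots> = exp (real t * e) * (1 + real t * d * 2 ^ t)"
    by (simp add: C_def algebra_simps)
  finally show ?thesis by (simp add: F_def t_def)
qed



definition Dset :: "nat \<Rightarrow> nat set \<Rightarrow> nat list set" where
  "Dset t I = {xs. length xs = t \<and> distinct xs \<and> set xs \<subseteq> I}"

lemma finite_Dset: "finite I \<Longrightarrow> finite (Dset t I)"
  unfolding Dset_def
  by (rule finite_subset[OF _ finite_lists_length_eq[of I t]]) auto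

lemma Dset_Suc: "Dset (Suc t) I = (\<Union>i\<in>I. (\<lambda>ys. i # ys) ` Dset t (I - {i}))"
proof (intro set_eqI iffI)
  fix xs assume "xs \<in> Dset (Suc t) I"
  then obtain y ys where xs: "xs = y # ys" "length ys = t" "y \<notin> set ys" "distinct ys" "y \<in> I" "set ys \<subseteq> I"
    unfolding Dset_def by (auto simp: length_Suc_conv)
  then have "ys \<in> Dset t (I - {y})" unfolding Dset_def by auto
  then show "xs \<in> (\<Union>i\<in>I. (\<lambda>ys. i # ys) ` Dset t (I - {i}))" using xs by auto
qed (auto simp: Dset_def)

lemma combo:
  fixes v :: "nat \<Rightarrow> real"
  assumes "finite I" "\<forall>i\<in>I. 0 \<le> v i \<and> v i \<le> 2" "2 * real t \<le> (\<Sum>i\<in>I. v i) + 2"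
  shows "(\<Prod>j<t. (\<Sum>i\<in>I. v i) - 2 * real j) \<le> (\<Sum>xs\<in>Dset t I. prod_list (map v xs))"
  using assms
proof (induction t arbitrary: I)
  case 0
  have "Dset 0 I = {[]}" by (auto simp: Dset_def)
  then show ?case by simp
next
  case (Suc t)
  define s where "s = (\<Sum>i\<in>I. v i)"
  have fin: "finite I" by fact
  have bnd: "\<forall>i\<in>I. 0 \<le> v i \<and> v i \<le> 2" by fact
  have st: "2 * real t \<le> s" using Suc.prems(3) unfolding s_def by simp
  have sub: "(\<Sum>i\<in>I - {i}. v i) = s - v i" if "i \<in> I" for i
    unfolding s_def using fin that by (simp add: sum_diff1)
  have step: "(\<Prod>j<t. s - 2 - 2 * real j) \<le> (\<Sum>ys\<in>Dset t (I - {i}). prod_list (map v ys))"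
    if i: "i \<in> I" for i
  proof -
    have "(\<Prod>j<t. s - 2 - 2 * real j) \<le> (\<Prod>j<t. (\<Sum>i\<in>I - {i}. v i) - 2 * real j)"
    proof (rule prod_mono)
      fix j assume "j \<in> {..<t}"
      then have "real j + 1 \<le> real t" by simp
      then show "0 \<le> s - 2 - 2 * real j \<and> s - 2 - 2 * real j \<le> (\<Sum>i\<in>I - {i}. v i) - 2 * real j"
        using st sub[OF i] bnd i by auto
    qed
    also have "\<dots> \<le> (\<Sum>ys\<in>Dset t (I - {i}). prod_list (map v ys))"
      by (rule Suc.IH) (use fin bnd sub[OF i] st i in auto)
    finally show ?thesis .
  qed
  have "(\<Sum>xs\<in>Dset (Suc t) I. prod_list (map v xs)) =
      (\<Sum>i\<in>I. \<Sum>xs\<in>(\<lambda>ys. i # ys) ` Dset t (I - {i}). prod_list (map v xs))"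
    unfolding Dset_Suc
    by (rule sum.UNION_disjoint) (auto simp: fin finite_Dset)
  also have "\<dots> = (\<Sum>i\<in>I. v i * (\<Sum>ys\<in>Dset t (I - {i}). prod_list (map v ys)))"
    by (rule sum.cong[OF refl]) (simp add: sum.reindex inj_on_def sum_distrib_left)
  also have "\<dots> \<ge> (\<Sum>i\<in>I. v i * (\<Prod>j<t. s - 2 - 2 * real j))"
    by (rule sum_mono) (use step bnd in \<open>auto intro!: mult_left_mono\<close>)
  finally have "(\<Sum>i\<in>I. v i * (\<Prod>j<t. s - 2 - 2 * real j)) \<le> (\<Sum>xs\<in>Dset (Suc t) I. prod_list (map v xs))" .
  moreover have "(\<Sum>i\<in>I. v i * (\<Prod>j<t. s - 2 - 2 * real j)) = (\<Prod>j<Suc t. s - 2 * real j)"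
  proof -
    have "(\<Prod>j<Suc t. s - 2 * real j) = (s - 2 * real 0) * (\<Prod>j<t. s - 2 * real (Suc j))"
      by (rule prod.lessThan_Suc_shift)
    also have "\<dots> = s * (\<Prod>j<t. s - 2 - 2 * real j)" by (simp add: algebra_simps)
    also have "\<dots> = (\<Sum>i\<in>I. v i * (\<Prod>j<t. s - 2 - 2 * real j))" by (simp add: s_def sum_distrib_right)
    finally show ?thesis by simp
  qed
  ultimately show ?case by (simp add: s_def)
qed

lemma card_Dset_le: "card (Dset t {..<n}) \<le> n ^ t"
proof -
  have "card (Dset t {..<n}) \<le> card {xs. set xs \<subseteq> {..<n} \<and> length xs = t}"
    by (rule card_mono) (auto simp: Dset_def intro: finite_lists_length_eq)
  also have "\<dots> = n ^ t" by (simp add: card_lists_length_eq)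
  finally show ?thesis .
qed

lemma card_Dset_pos: "t \<le> n \<Longrightarrow> 0 < card (Dset t {..<n})"
proof -
  assume "t \<le> n"
  then have "[0..<t] \<in> Dset t {..<n}" by (auto simp: Dset_def)
  then show ?thesis using finite_Dset[of "{..<n}" t] card_gt_0_iff by blast
qed

lemma avg_lower:
  fixes v :: "nat \<Rightarrow> real"
  assumes "\<forall>i<n. 0 \<le> v i \<and> v i \<le> 2" "t \<le> n" "2 * real t \<le> (\<Sum>i<n. v i)"
  shows "(((\<Sum>i<n. v i) - 2 * real t) / real n) ^ t \<le> (\<Sum>xs\<in>Dset t {..<n}. prod_list (map v xs)) / real (card (Dset t {..<n}))"
proof -
  define s where "s = (\<Sum>i<n. v i)"
  have s2: "0 \<le> s - 2 * real t" using assms(3) by (simp add: s_def)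
  have c0: "0 < real (card (Dset t {..<n}))" using card_Dset_pos[OF assms(2)] by simp
  have cle: "real (card (Dset t {..<n})) \<le> real n ^ t" using card_Dset_le[of t n] by (metis of_nat_le_iff of_nat_power)
  have "(s - 2 * real t) ^ t = (\<Prod>j<t. s - 2 * real t)" by simp
  also have "\<dots> \<le> (\<Prod>j<t. s - 2 * real j)"
    by (rule prod_mono) (use s2 in auto)
  also have "\<dots> \<le> (\<Sum>xs\<in>Dset t {..<n}. prod_list (map v xs))"
    unfolding s_def by (rule combo) (use assms in \<open>auto simp: s_def\<close>)
  finally have A: "(s - 2 * real t) ^ t \<le> (\<Sum>xs\<in>Dset t {..<n}. prod_list (map v xs))" .
  show ?thesis
  proof (cases "n = 0")
    case True
    then have "t = 0" using assms(2) by simp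
    then show ?thesis using True by (simp add: Dset_def)
  next
    case False
    then have n0: "0 < real n" by simp
    have "((s - 2 * real t) / real n) ^ t = (s - 2 * real t) ^ t / real n ^ t" by (simp add: power_divide)
    also have "\<dots> \<le> (s - 2 * real t) ^ t / real (card (Dset t {..<n}))"
      by (rule divide_left_mono) (use s2 c0 cle n0 in auto)
    also have "\<dots> \<le> (\<Sum>xs\<in>Dset t {..<n}. prod_list (map v xs)) / real (card (Dset t {..<n}))"
      by (rule divide_right_mono[OF A]) (use c0 in simp)
    finally show ?thesis by (simp add: s_def)
  qed
qed



lemma meas_sumlist: "(\<lambda>\<phi>. \<Sum>x\<leftarrow>S. \<phi> x) \<in> borel_measurable output_space"
proof (induction S)
  case (Cons a S)
  then show ?case by (simp add: borel_measurable_add meas_app)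
qed simp

lemma meas_emp[measurable]: "(\<lambda>\<phi>. emp_mean S \<phi>) \<in> borel_measurable output_space"
  unfolding emp_mean_def by (intro borel_measurable_divide meas_sumlist borel_measurable_const)

lemma sum_emp: "length S = n \<Longrightarrow> 0 < n \<Longrightarrow> (\<Sum>i<n. \<phi> (S!i)) = real n * emp_mean S \<phi>"
  unfolding emp_mean_def
  by (simp add: sum_list_sum_nth atLeast0LessThan)

lemma meas_A: "sets M = sets output_space \<Longrightarrow> f \<in> borel_measurable output_space \<Longrightarrow> f \<in> borel_measurable M"
  by (subst measurable_cong_sets[of M output_space]) auto

lemma tail_bound:
  fixes A :: "'a::countable list \<Rightarrow> ('a \<Rightarrow> real) measure" and P :: "'a pmf"
  assumes alg: "rand_alg n A" and dp: "diff_private n e d A" and e0: "0 \<le> e" and d0: "0 \<le> d"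
    and \<sigma>: "\<sigma> \<in> {-1,1}" and tn: "t \<le> n" and n0: "0 < n" and \<tau>: "0 < \<tau>"
    and K: "0 < 1 + \<tau> - 2 * real t / real n"
  shows "measure_pmf.expectation (replicate_pmf n P)
      (\<lambda>S. measure (A S) {\<phi>\<in>space output_space. \<tau> < \<sigma> * (emp_mean S \<phi> - pop_mean P \<phi>)})
    \<le> exp (real t * e) * (1 + real t * d * 2 ^ t) / (1 + \<tau> - 2 * real t / real n) ^ t"
proof -
  define D where "D = Dset t {..<n}"
  define c where "c = real (card D)"
  define K0 where "K0 = 1 + \<tau> - 2 * real t / real n"
  define Bnd where "Bnd = exp (real t * e) * (1 + real t * d * 2 ^ t)"
  define Fx where "Fx = (\<lambda>xs S. \<integral>\<phi>. prod_list (map (\<lambda>i. fv \<sigma> P \<phi> (S!i)) xs) \<partial>A S)"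
  define avg where "avg = (\<lambda>S \<phi>. (\<Sum>xs\<in>D. prod_list (map (\<lambda>i. fv \<sigma> P \<phi> (S!i)) xs)) / c)"
  define E where "E = (\<lambda>S. {\<phi>\<in>space output_space. \<tau> < \<sigma> * (emp_mean S \<phi> - pop_mean P \<phi>)})"
  have finD: "finite D" unfolding D_def by (rule finite_Dset) simp
  have c0: "0 < c" unfolding c_def D_def using card_Dset_pos[OF tn] by simp
  have K0: "0 < K0" using K by (simp add: K0_def)
  have AS: "prob_space (A S)" "sets (A S) = sets output_space" if "length S = n" for S
    using alg that by (auto simp: rand_alg_def)
  have spA: "space (A S) = space output_space" if "length S = n" for S
    using sets_eq_imp_space_eq[OF AS(2)[OF that]] .
  have supn: "length S = n" if "S \<in> set_pmf (replicate_pmf n P)" for S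
    using that by (simp add: set_replicate_pmf)
  have Dlen: "length xs = t" "distinct xs" "set xs \<subseteq> {..<n}" if "xs \<in> D" for xs
    using that by (auto simp: D_def Dset_def)
  have prodb: "0 \<le> prod_list (map (\<lambda>i. fv \<sigma> P \<phi> (S!i)) xs) \<and> prod_list (map (\<lambda>i. fv \<sigma> P \<phi> (S!i)) xs) \<le> 2 ^ t"
    if "xs \<in> D" "\<phi> \<in> space output_space" for xs \<phi> S
    using fvprod_bounds[OF \<sigma> that(2), of P "map (\<lambda>i. S!i) xs"] Dlen[OF that(1)] by (simp add: o_def)
  have prodm: "(\<lambda>\<phi>. prod_list (map (\<lambda>i. fv \<sigma> P \<phi> (S!i)) xs)) \<in> borel_measurable output_space" for xs S
    using meas_fvprod[of \<sigma> P "map (\<lambda>i. S!i) xs"] by (simp add: o_def)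
  have Fxb: "0 \<le> Fx xs S \<and> Fx xs S \<le> 2 ^ t" if "xs \<in> D" "length S = n" for xs S
    unfolding Fx_def by (rule int_bounds[OF AS[OF that(2)] prodm]) (use prodb that in auto)
  have avgm: "avg S \<in> borel_measurable output_space" for S
    unfolding avg_def by (intro borel_measurable_divide borel_measurable_sum prodm borel_measurable_const)
  have avgb: "0 \<le> avg S \<phi> \<and> avg S \<phi> \<le> 2 ^ t" if "\<phi> \<in> space output_space" for S \<phi>
  proof -
    have "0 \<le> (\<Sum>xs\<in>D. prod_list (map (\<lambda>i. fv \<sigma> P \<phi> (S!i)) xs))"
      by (rule sum_nonneg) (use prodb that in auto)
    moreover have "(\<Sum>xs\<in>D. prod_list (map (\<lambda>i. fv \<sigma> P \<phi> (S!i)) xs)) \<le> (\<Sum>xs\<in>D. 2 ^ t)"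
      by (rule sum_mono) (use prodb that in auto)
    ultimately show ?thesis using c0 by (auto simp: avg_def c_def divide_le_eq mult.commute)
  qed
  have int_avg: "(\<integral>\<phi>. avg S \<phi> \<partial>A S) = (\<Sum>xs\<in>D. Fx xs S) / c" if S: "length S = n" for S
  proof -
    interpret AS: prob_space "A S" by (rule AS(1)[OF S])
    have "(\<integral>\<phi>. avg S \<phi> \<partial>A S) = (\<integral>\<phi>. (\<Sum>xs\<in>D. prod_list (map (\<lambda>i. fv \<sigma> P \<phi> (S!i)) xs)) \<partial>A S) / c"
      unfolding avg_def by simp
    also have "(\<integral>\<phi>. (\<Sum>xs\<in>D. prod_list (map (\<lambda>i. fv \<sigma> P \<phi> (S!i)) xs)) \<partial>A S) = (\<Sum>xs\<in>D. Fx xs S)"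
      unfolding Fx_def
    proof (rule Bochner_Integration.integral_sum)
      fix xs assume xs: "xs \<in> D"
      show "integrable (A S) (\<lambda>\<phi>. prod_list (map (\<lambda>i. fv \<sigma> P \<phi> (S!i)) xs))"
        by (rule AS.integrable_const_bound[where B="2^t"])
           (use prodb[OF xs] spA[OF S] meas_A[OF AS(2)[OF S] prodm] in auto)
    qed
    finally show ?thesis .
  qed
  have markov: "measure (A S) (E S) \<le> (\<integral>\<phi>. avg S \<phi> \<partial>A S) / K0 ^ t" if S: "length S = n" for S
  proof -
    interpret AS: prob_space "A S" by (rule AS(1)[OF S])
    have Em: "E S \<in> sets output_space" unfolding E_def by measurable
    have lower: "K0 ^ t * indicator (E S) \<phi> \<le> avg S \<phi>" if \<phi>: "\<phi> \<in> space output_space" for \<phi>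
    proof (cases "\<phi> \<in> E S")
      case False then show ?thesis using avgb[OF \<phi>, of S] by simp
    next
      case True
      define v where "v = (\<lambda>i. fv \<sigma> P \<phi> (S!i))"
      have vb: "\<forall>i<n. 0 \<le> v i \<and> v i \<le> 2" unfolding v_def using fv_bounds[OF \<sigma> \<phi>] by blast
      have sv: "(\<Sum>i<n. v i) = real n + \<sigma> * (real n * emp_mean S \<phi> - real n * pop_mean P \<phi>)"
        unfolding v_def fv_def using sum_emp[OF S n0, of \<phi>]
        by (simp add: sum.distrib sum_distrib_left[symmetric] sum_subtractf algebra_simps)
      have gt: "\<tau> < \<sigma> * (emp_mean S \<phi> - pop_mean P \<phi>)" using True by (simp add: E_def)
      have "real n * \<tau> < real n * (\<sigma> * (emp_mean S \<phi> - pop_mean P \<phi>))"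
        using gt n0 by (intro mult_strict_left_mono) auto
      then have "real n * (1 + \<tau>) < (\<Sum>i<n. v i)"
        unfolding sv by (simp add: algebra_simps)
      then have big: "real n * K0 + 2 * real t < (\<Sum>i<n. v i)"
        using n0 unfolding K0_def by (simp add: algebra_simps)
      have "K0 \<le> ((\<Sum>i<n. v i) - 2 * real t) / real n"
        using big n0 by (simp add: field_simps)
      then have "K0 ^ t \<le> (((\<Sum>i<n. v i) - 2 * real t) / real n) ^ t"
        by (rule power_mono) (use K0 in simp)
      also have "\<dots> \<le> avg S \<phi>"
        unfolding avg_def c_def D_def v_def[symmetric]
      proof (rule avg_lower)
        have "0 \<le> real n * K0" using K0 by simp
        then show "2 * real t \<le> (\<Sum>i<n. v i)" using big by linarith
      qed (use vb tn in auto)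
      finally show ?thesis using True by simp
    qed
    have "K0 ^ t * measure (A S) (E S) = (\<integral>\<phi>. K0 ^ t * indicator (E S) \<phi> \<partial>A S)"
      using Em spA[OF S] by (simp add: Int_absorb2 sets.sets_into_space)
    also have "\<dots> \<le> (\<integral>\<phi>. avg S \<phi> \<partial>A S)"
    proof (rule integral_mono)
      show "integrable (A S) (\<lambda>\<phi>. K0 ^ t * indicator (E S) \<phi>)"
        using Em AS(2)[OF S] by (intro integrable_mult_right integrable_real_indicator) (auto simp: AS.emeasure_eq_measure)
      show "integrable (A S) (avg S)"
        by (rule AS.integrable_const_bound[where B="2^t"])
           (use avgb spA[OF S] meas_A[OF AS(2)[OF S] avgm] in auto)
    qed (use lower spA[OF S] in auto)
    finally show ?thesis using K0 by (simp add: field_simps)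
  qed
  have mb: "0 \<le> measure (A S) (E S) \<and> measure (A S) (E S) \<le> 1" if "length S = n" for S
    using prob_space.prob_le_1[OF AS(1)[OF that]] by simp
  have intb: "\<bar>(\<integral>\<phi>. avg S \<phi> \<partial>A S)\<bar> \<le> 2 ^ t" if "length S = n" for S
    using int_bounds[OF AS[OF that] avgm, where a=0 and b="2^t"] avgb by auto
  have "measure_pmf.expectation (replicate_pmf n P) (\<lambda>S. measure (A S) (E S))
      \<le> measure_pmf.expectation (replicate_pmf n P) (\<lambda>S. (\<Sum>xs\<in>D. Fx xs S) / c / K0 ^ t)"
  proof (rule pmf_integral_mono_supp[where B=1 and B'="2^t / K0^t"])
    fix S assume "S \<in> set_pmf (replicate_pmf n P)"
    then have lS: "length S = n" by (rule supn)
    show "measure (A S) (E S) \<le> (\<Sum>xs\<in>D. Fx xs S) / c / K0 ^ t"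
      using markov[OF lS] int_avg[OF lS] by simp
    show "\<bar>measure (A S) (E S)\<bar> \<le> 1" using mb[OF lS] by simp
    have "\<bar>(\<Sum>xs\<in>D. Fx xs S) / c\<bar> \<le> 2 ^ t" using intb[OF lS] int_avg[OF lS] by simp
    then have "\<bar>(\<Sum>xs\<in>D. Fx xs S) / c\<bar> / K0 ^ t \<le> 2 ^ t / K0 ^ t"
      by (rule divide_right_mono) (use K0 in simp)
    then show "\<bar>(\<Sum>xs\<in>D. Fx xs S) / c / K0 ^ t\<bar> \<le> 2 ^ t / K0 ^ t"
      using K0 by (simp add: abs_mult)
  qed
  also have "\<dots> = (\<Sum>xs\<in>D. measure_pmf.expectation (replicate_pmf n P) (Fx xs)) / c / K0 ^ t"
  proof -
    have "measure_pmf.expectation (replicate_pmf n P) (\<lambda>S. \<Sum>xs\<in>D. Fx xs S) = (\<Sum>xs\<in>D. measure_pmf.expectation (replicate_pmf n P) (Fx xs))"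
      by (rule Bochner_Integration.integral_sum) (rule pmf_integrable_supp[where B="2^t"], use Fxb supn in auto)
    then show ?thesis by simp
  qed
  also have "\<dots> \<le> (\<Sum>xs\<in>D. Bnd) / c / K0 ^ t"
  proof -
    have "(\<Sum>xs\<in>D. measure_pmf.expectation (replicate_pmf n P) (Fx xs)) \<le> (\<Sum>xs\<in>D. Bnd)"
    proof (rule sum_mono)
      fix xs assume xs: "xs \<in> D"
      show "measure_pmf.expectation (replicate_pmf n P) (Fx xs) \<le> Bnd"
        using tuple_bound[OF alg dp e0 d0 \<sigma> Dlen(2)[OF xs] Dlen(3)[OF xs], of P] Dlen(1)[OF xs]
        by (simp add: Fx_def Bnd_def)
    qed
    then show ?thesis using c0 K0 by (intro divide_right_mono) auto
  qed
  also have "\<dots> = Bnd / K0 ^ t" using c0 by (simp add: c_def)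
  finally show ?thesis by (simp add: E_def Bnd_def K0_def)
qed



lemma ln_lower: fixes x :: real assumes "0 \<le> x" shows "2 * x / (2 + x) \<le> ln (1 + x)"
proof -
  let ?f = "\<lambda>y::real. ln (1 + y) - 2 * y / (2 + y)"
  have "?f 0 \<le> ?f x"
  proof (rule DERIV_nonneg_imp_nondecreasing[OF assms])
    fix y :: real assume y: "0 \<le> y" "y \<le> x"
    have d: "DERIV ?f y :> (1 / (1 + y) - 4 / (2 + y)^2)"
      using y by (auto intro!: derivative_eq_intros simp: field_simps power2_eq_square)
    have "4 * (1 + y) \<le> (2 + y)^2" by (simp add: power2_eq_square algebra_simps)
    then have "4 / (2 + y)^2 \<le> 1 / (1 + y)" using y by (simp add: field_simps)
    with d show "\<exists>z. DERIV ?f y :> z \<and> z \<ge> 0" by auto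
  qed
  then show ?thesis by simp
qed

lemma emp_bounds:
  assumes "\<phi> \<in> space output_space"
  shows "0 \<le> emp_mean S \<phi> \<and> emp_mean S \<phi> \<le> 1"
proof -
  have b: "0 \<le> \<phi> x \<and> \<phi> x \<le> 1" for x using assms by (auto simp: space_out)
  have "0 \<le> (\<Sum>x\<leftarrow>S. \<phi> x)" by (rule sum_list_nonneg) (use b in auto)
  moreover have "(\<Sum>x\<leftarrow>S. \<phi> x) \<le> (\<Sum>x\<leftarrow>S. 1)" by (rule sum_list_mono) (use b in auto)
  ultimately show ?thesis unfolding emp_mean_def
    by (cases "length S = 0") (auto simp: sum_list_triv field_simps)
qed



theorem theorem3p3:
  fixes A :: "'a::countable list \<Rightarrow> ('a \<Rightarrow> real) measure"
    and P :: "'a pmf"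
    and n :: nat and \<epsilon> \<delta> \<beta> \<tau> :: real
  assumes alg: "rand_alg n A"
    and dp: "diff_private n \<epsilon> \<delta> A"
    and beta: "\<beta> > 0" and tau: "\<tau> > 0"
    and n_ge: "real n \<ge> 48 * ln (4 / \<beta>) / \<tau>\<^sup>2"
    and eps: "\<epsilon> \<le> \<tau> / 4"
    and delta: "\<delta> = exp (- 4 * ln (8 / \<beta>) / \<tau>)"
  shows "measure_pmf.expectation (replicate_pmf n P)
           (\<lambda>S. measure (A S) {\<phi> \<in> space output_space. \<bar>pop_mean P \<phi> - emp_mean S \<phi>\<bar> > \<tau>})
         \<le> \<beta>"
proof -
  define T where "T = (\<lambda>S. {\<phi> \<in> space output_space. \<bar>pop_mean P \<phi> - emp_mean S \<phi>\<bar> > \<tau>})"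
  have AS: "prob_space (A S)" "sets (A S) = sets output_space" if "length S = n" for S
    using alg that by (auto simp: rand_alg_def)
  have supn: "length S = n" if "S \<in> set_pmf (replicate_pmf n P)" for S
    using that by (simp add: set_replicate_pmf)
  have mb: "0 \<le> measure (A S) X \<and> measure (A S) X \<le> 1" if "length S = n" for S X
    using prob_space.prob_le_1[OF AS(1)[OF that]] by simp
  consider (big) "1 \<le> \<beta> \<or> 1 \<le> \<tau>" | (main) "\<beta> < 1" "\<tau> < 1" by linarith
  then show ?thesis
  proof cases
    case big
    show ?thesis
    proof (cases "1 \<le> \<tau>")
      case True
      have e: "{\<phi> \<in> space output_space. \<bar>pop_mean P \<phi> - emp_mean S \<phi>\<bar> > \<tau>} = {}" for S
      proof -
        have "\<bar>pop_mean P \<phi> - emp_mean S \<phi>\<bar> \<le> 1" if "\<phi> \<in> space output_space" for \<phi>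
          using pop_mean_bounds[OF that, of P] emp_bounds[OF that, of S] by auto
        then show ?thesis using True by force
      qed
      show ?thesis unfolding e using beta by simp
    next
      case False
      with big have b1: "1 \<le> \<beta>" by simp
      have "measure_pmf.expectation (replicate_pmf n P) (\<lambda>S. measure (A S) (T S))
          \<le> measure_pmf.expectation (replicate_pmf n P) (\<lambda>S. 1)"
        by (rule pmf_integral_mono_supp[where B=1 and B'=1]) (use mb supn in auto)
      then show ?thesis using b1 by (simp add: T_def)
    qed
  next
    case main
    define L where "L = ln (2 / \<beta>)"
    define u where "u = 1 / \<tau>"
    have ln2a: "2/3 \<le> ln (2::real)" by (rule ln2_ge_two_thirds)
    have ln2b: "ln (2::real) \<le> 25/36" by (rule ln2_le_25_over_36)
    have "ln 2 \<le> L" unfolding L_def using beta main by (subst ln_le_cancel_iff) (auto simp: field_simps)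
    then have L0: "2/3 \<le> L" using ln2a by linarith
    have ln4: "ln (4 / \<beta>) = L + ln 2"
    proof -
      have "ln (4 / \<beta>) = ln (2 * (2 / \<beta>))" by simp
      also have "\<dots> = ln 2 + ln (2 / \<beta>)" by (rule ln_mult_pos) (use beta in auto)
      finally show ?thesis unfolding L_def by simp
    qed
    have ln8: "ln (8 / \<beta>) = L + 2 * ln 2"
    proof -
      have "ln (8 / \<beta>) = ln (2 * (2 * (2 / \<beta>)))" by simp
      also have "\<dots> = ln 2 + ln (2 * (2 / \<beta>))" by (rule ln_mult_pos) (use beta in auto)
      also have "ln (2 * (2 / \<beta>)) = ln 2 + ln (2 / \<beta>)" by (rule ln_mult_pos) (use beta in auto)
      finally show ?thesis unfolding L_def by simp
    qed
    have u1: "1 < u" unfolding u_def using main tau by simp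
    have tu: "\<tau> * u = 1" unfolding u_def using tau by simp
    have nL: "48 * L * u^2 \<le> real n"
    proof -
      have "48 * ln (4 / \<beta>) / \<tau>\<^sup>2 = 48 * (L + ln 2) * u^2" unfolding u_def ln4 by (simp add: power_divide)
      moreover have "48 * L * u^2 \<le> 48 * (L + ln 2) * u^2" using ln2a by (intro mult_right_mono) auto
      ultimately show ?thesis using n_ge by linarith
    qed
    define t where "t = nat \<lceil>5 * L * u\<rceil>"
    have Lu0: "0 < L * u" using L0 u1 by simp
    have t_eq: "real t = real_of_int \<lceil>5 * L * u\<rceil>" unfolding t_def using Lu0 by simp
    have t_ge: "5 * L * u \<le> real t" unfolding t_eq by simp
    have t_le: "real t \<le> 5 * L * u + 1" unfolding t_eq by linarith
    have uu: "u \<le> u^2" using u1 by (simp add: power2_eq_square)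
    have u2: "1 \<le> u^2" using u1 uu by linarith
    have "5 * L * u \<le> 5 * L * u^2" using uu L0 by (intro mult_left_mono) auto
    moreover have "1 \<le> 43 * L * u^2" proof -
      have "1 \<le> 43 * L" using L0 by linarith
      also have "\<dots> \<le> 43 * L * u^2" using u2 L0 mult_left_mono[of 1 "u^2" "43 * L"] by simp
      finally show ?thesis .
    qed
    ultimately have tn_r: "real t \<le> real n" using t_le nL by linarith
    then have tn: "t \<le> n" by simp
    have Lu2: "0 < 48 * L * u^2" using L0 u1 by (intro mult_pos_pos) auto
    have n0r: "0 < real n" using nL Lu2 by linarith
    then have n0: "0 < n" by simp
    have x1: "2 * real t / real n \<le> 13 / 48 * \<tau>"
    proof -
      have "2 * real t / real n \<le> (10 * L * u + 2) / (48 * L * u^2)"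
        by (rule frac_le) (use t_le nL Lu2 in auto)
      also have "\<dots> \<le> 13 / 48 * \<tau>"
      proof -
        have "3 * L * 1 \<le> 3 * L * u" using L0 u1 by (intro mult_left_mono) auto
        then have a: "2 \<le> 3 * L * u" using L0 by linarith
        have "u^2 * \<tau> = u" using tu by (simp add: power2_eq_square algebra_simps)
        then have eq: "13 * (48 * L * u^2) * \<tau> = 624 * (L * u)" by (simp add: algebra_simps)
        have "(10 * L * u + 2) * 48 \<le> 13 * (48 * L * u^2) * \<tau>"
        proof -
          have e1: "(10 * L * u + 2) * 48 = 480 * (L * u) + 96" by (simp add: algebra_simps)
          have e2: "3 * L * u = 3 * (L * u)" by simp
          show ?thesis unfolding eq e1 using a unfolding e2 by linarith
        qed
        then show ?thesis using Lu2 by (simp add: divide_le_eq algebra_simps)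
      qed
      finally show ?thesis .
    qed
    define x where "x = \<tau> - 2 * real t / real n"
    have xl: "35 / 48 * \<tau> \<le> x" using x1 unfolding x_def by linarith
    have xu: "x \<le> \<tau>" unfolding x_def using n0r by simp
    have x0: "0 \<le> x" using xl tau by linarith
    have K: "0 < 1 + \<tau> - 2 * real t / real n" using x0 unfolding x_def by linarith
    have lnx: "70 / 144 * \<tau> \<le> ln (1 + x)"
    proof -
      have "2 * x / 3 \<le> 2 * x / (2 + x)" using x0 xu main by (intro divide_left_mono) auto
      then show ?thesis using ln_lower[OF x0] xl by linarith
    qed
    have g: "real t * (\<tau> / 4) - real t * ln (1 + x) \<le> - (170 / 144) * L"
    proof -
      have "real t * (\<tau> / 4) - real t * ln (1 + x) = real t * (\<tau> / 4 - ln (1 + x))" by (simp add: algebra_simps)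
      also have "\<dots> \<le> real t * (- (34/144) * \<tau>)" using lnx by (intro mult_left_mono) auto
      also have "\<dots> \<le> (5 * L * u) * (- (34/144) * \<tau>)" using t_ge tau by (intro mult_right_mono_neg) auto
      also have "\<dots> = - (170/144) * L * (\<tau> * u)" by (simp add: algebra_simps)
      also have "\<dots> = - (170/144) * L" using tu by simp
      finally show ?thesis .
    qed
    have d0: "0 \<le> \<delta>" using delta by simp
    have Td: "real t * \<delta> * 2 ^ t \<le> 11 / 128"
    proof -
      have dd: "\<delta> = exp (- 4 * (L + 2 * ln 2) * u)" unfolding delta ln8 u_def by simp
      have p2: "(2::real) ^ t = exp (real t * ln 2)" by (simp add: exp_of_nat_mult)
      have "real t * ln 2 \<le> (5 * L * u + 1) * ln 2" using t_le ln2a by (intro mult_right_mono) auto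
      also have "\<dots> \<le> 5 * L * u * (25/36) + ln 2"
      proof -
        have m: "(L * u) * ln 2 \<le> (L * u) * (25/36)" by (rule mult_left_mono) (use ln2b Lu0 in auto)
        have "(5 * L * u + 1) * ln 2 = 5 * ((L * u) * ln 2) + ln 2" by (simp add: algebra_simps)
        moreover have "5 * L * u * (25/36) = 5 * ((L * u) * (25/36))" by (simp add: algebra_simps)
        ultimately show ?thesis using m by linarith
      qed
      finally have tl: "real t * ln 2 \<le> 5 * L * u * (25/36) + ln 2" .
      have z: "ln 2 * 1 \<le> ln 2 * u" using u1 ln2a by (intro mult_left_mono) auto
      have q1: "4 * (L + 2 * ln 2) * u = 4 * (L * u) + 8 * (ln 2 * u)" by (simp add: algebra_simps)
      have q2: "5 * L * u * (25/36) = (125/36) * (L * u)" by (simp add: algebra_simps)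
      have q3: "L * u / 2 = (1/2) * (L * u)" by simp
      have ex: "real t * ln 2 - 4 * (L + 2 * ln 2) * u \<le> - (L * u / 2) - 7 * ln 2"
        unfolding q1 q3 using tl unfolding q2 using z Lu0 by linarith
      have e1: "L * u / 2 \<le> exp (L * u / 2)" using exp_ge_add_one_self[of "L * u / 2"] by linarith
      have e2: "1 \<le> exp (L * u / 2)" using Lu0 by simp
      have tb: "real t \<le> 11 * exp (L * u / 2)" using t_le e1 e2 by linarith
      have "real t * \<delta> * 2 ^ t = real t * exp (real t * ln 2 - 4 * (L + 2 * ln 2) * u)"
        unfolding dd p2 by (simp add: exp_add[symmetric] algebra_simps)
      also have "\<dots> \<le> (11 * exp (L * u / 2)) * exp (- (L * u / 2) - 7 * ln 2)"
        using tb ex by (intro mult_mono) auto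
      also have "\<dots> = 11 * exp (- 7 * ln 2)" by (simp add: exp_add[symmetric])
      also have "exp (- 7 * ln (2::real)) = 1 / 128"
      proof -
        have "exp (real 7 * ln 2) = exp (ln (2::real)) ^ 7" by (rule exp_of_nat_mult)
        then have "exp (7 * ln 2) = (128::real)" by simp
        then show ?thesis by (simp add: exp_minus inverse_eq_divide)
      qed
      finally show ?thesis by simp
    qed
    have final: "2 * (exp (real t * (\<tau> / 4)) * (1 + real t * \<delta> * 2 ^ t) / (1 + \<tau> - 2 * real t / real n) ^ t) \<le> \<beta>"
    proof -
      have px: "(1 + \<tau> - 2 * real t / real n) ^ t = exp (real t * ln (1 + x))"
        using x0 by (simp add: exp_of_nat_mult x_def algebra_simps)
      have "exp (real t * (\<tau> / 4)) * (1 + real t * \<delta> * 2 ^ t) / (1 + \<tau> - 2 * real t / real n) ^ t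
          = (1 + real t * \<delta> * 2 ^ t) * exp (real t * (\<tau> / 4) - real t * ln (1 + x))"
        unfolding px by (simp add: exp_diff)
      also have "\<dots> \<le> (1 + 11/128) * exp (- (170 / 144) * L)"
        using Td g d0 by (intro mult_mono) auto
      also have "exp (- (170 / 144) * L) = exp (- L) * exp (- (26/144) * L)" by (simp add: exp_add[symmetric])
      also have "exp (- L) = \<beta> / 2" unfolding L_def using beta by (simp add: exp_minus inverse_eq_divide)
      also have "exp (- (26/144) * L) \<le> exp (- 13 / 108)" using L0 by simp
      finally have A: "exp (real t * (\<tau> / 4)) * (1 + real t * \<delta> * 2 ^ t) / (1 + \<tau> - 2 * real t / real n) ^ t
          \<le> (1 + 11/128) * (\<beta> / 2 * exp (- 13 / 108))" using beta by (simp add: mult_left_mono)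
      have "1 + 13/108 \<le> exp (13 / 108::real)" by (rule exp_ge_add_one_self)
      then have c: "(1 + 11/128) * exp (- 13 / 108::real) \<le> 1" by (simp add: exp_minus field_simps)
      have "((1 + 11/128) * exp (- 13 / 108)) * (\<beta> / 2) \<le> 1 * (\<beta> / 2)"
        by (rule mult_right_mono[OF c]) (use beta in simp)
      then have "(1 + 11/128) * (\<beta> / 2 * exp (- 13 / 108)) \<le> \<beta> / 2"
        by (simp add: mult_ac)
      then show ?thesis using A by linarith
    qed
    have dp': "diff_private n (\<tau> / 4) \<delta> A"
      unfolding diff_private_def
    proof (intro allI impI)
      fix x y :: "'a list" and X :: "('a \<Rightarrow> real) set" assume adj: "adjacent n x y" and X: "X \<in> sets output_space"
      have "measure (A x) X \<le> exp \<epsilon> * measure (A y) X + \<delta>" using dp adj X by (simp add: diff_private_def)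
      also have "\<dots> \<le> exp (\<tau> / 4) * measure (A y) X + \<delta>"
        using eps by (intro add_right_mono mult_right_mono) auto
      finally show "measure (A x) X \<le> exp (\<tau> / 4) * measure (A y) X + \<delta>" .
    qed
    define E where "E = (\<lambda>\<sigma> S. {\<phi>\<in>space output_space. \<tau> < \<sigma> * (emp_mean S \<phi> - pop_mean P \<phi>)})"
    define Bd where "Bd = exp (real t * (\<tau> / 4)) * (1 + real t * \<delta> * 2 ^ t) / (1 + \<tau> - 2 * real t / real n) ^ t"
    have tb1: "measure_pmf.expectation (replicate_pmf n P) (\<lambda>S. measure (A S) (E 1 S)) \<le> Bd"
      using tail_bound[OF alg dp' _ d0 _ tn n0 tau K, of 1] tau by (simp add: E_def Bd_def)
    have tb2: "measure_pmf.expectation (replicate_pmf n P) (\<lambda>S. measure (A S) (E (-1) S)) \<le> Bd"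
      using tail_bound[OF alg dp' _ d0 _ tn n0 tau K, of "-1"] tau by (simp add: E_def Bd_def)
    have Em: "E \<sigma> S \<in> sets output_space" for \<sigma> S unfolding E_def by measurable
    have split: "measure (A S) (T S) \<le> measure (A S) (E 1 S) + measure (A S) (E (-1) S)" if S: "length S = n" for S
    proof -
      interpret AS: prob_space "A S" by (rule AS(1)[OF S])
      have sub: "T S \<subseteq> E 1 S \<union> E (-1) S" unfolding T_def E_def by auto
      have "measure (A S) (T S) \<le> measure (A S) (E 1 S \<union> E (-1) S)"
        by (rule AS.finite_measure_mono[OF sub]) (use Em AS(2)[OF S] in auto)
      also have "\<dots> \<le> measure (A S) (E 1 S) + measure (A S) (E (-1) S)"
        by (rule measure_Un_le) (use Em AS(2)[OF S] in auto)
      finally show ?thesis .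
    qed
    have "measure_pmf.expectation (replicate_pmf n P) (\<lambda>S. measure (A S) (T S))
        \<le> measure_pmf.expectation (replicate_pmf n P) (\<lambda>S. measure (A S) (E 1 S) + measure (A S) (E (-1) S))"
      by (rule pmf_integral_mono_supp[where B=1 and B'=2]) (use split supn mb in \<open>auto simp: abs_le_iff\<close>, smt (verit) mb)
    also have "\<dots> = measure_pmf.expectation (replicate_pmf n P) (\<lambda>S. measure (A S) (E 1 S))
        + measure_pmf.expectation (replicate_pmf n P) (\<lambda>S. measure (A S) (E (-1) S))"
      by (rule Bochner_Integration.integral_add; rule pmf_integrable_supp[where B=1]) (use supn mb in auto)
    also have "\<dots> \<le> 2 * Bd" using tb1 tb2 by linarith
    also have "\<dots> \<le> \<beta>" using final by (simp add: Bd_def)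
    finally show ?thesis by (simp add: T_def)
  qed
qed

end
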